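(* Let $n\ge3$, $\mu_1,\mu_2,\beta>0$, $p=2q+1$ with $\frac{n}{n-2}<p<\frac{n+2}{n-2}$, let $(u,v)$ be a positive solution of (S) (radially symmetric), and let $\bar u,\bar v$ be its Kelvin transform and $\bar w_1,\bar w_2$ as defined in the context. Then (1) $\bar u'(r)<0$ and $\bar v'(r)<0$ for all $r>0$; (2) $\bar w_i'(t)>-\delta_0\bar w_i(t)$ for all $t\in\mathbb{R}$, $i=1,2$.
   Context: System (S): $-\Delta u=\mu_1u^{2q+1}+\beta u^qv^{q+1}$, $-\Delta v=\mu_2v^{2q+1}+\beta v^qu^{q+1}$ in $\mathbb{R}^n\setminus\{0\}$; positive solutions are $C^2(\mathbb{R}^n\setminus\{0\})$ pairs with $u,v>0$. Kelvin transform: $\bar u(x)=|x|^{2-n}u(x/|x|^2)$, $\bar v(x)=|x|^{2-n}v(x/|x|^2)$; it solves $-\Delta\bar u=|x|^\alpha(\mu_1\bar u^{2q+1}+\beta\bar u^q\bar v^{q+1})$, $-\Delta\bar v=|x|^\alpha(\mu_2\bar v^{2q+1}+\beta\bar v^q\bar u^{q+1})$ in $\mathbb{R}^n\setminus\{0\}$ with $\alpha=p(n-2)-(n+2)\in(-2,0)$; radial functions are written $\bar u(x)=\bar u(|x|)$. $\delta_0=\frac{2+\alpha}{p-1}$, $\bar w_1(t)=e^{-\delta_0t}\bar u(e^{-t})$, $\bar w_2(t)=e^{-\delta_0t}\bar v(e^{-t})$. *)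

theory Defs
  imports "HOL-Analysis.Analysis"
begin

definition C2_on :: "(real^'n \<Rightarrow> real) \<Rightarrow> (real^'n) set \<Rightarrow> bool" where
  "C2_on u S \<longleftrightarrow> (\<exists>Du :: real^'n \<Rightarrow> ((real^'n) \<Rightarrow>\<^sub>L real).
     \<exists>D2u :: real^'n \<Rightarrow> ((real^'n) \<Rightarrow>\<^sub>L ((real^'n) \<Rightarrow>\<^sub>L real)).
       (\<forall>x\<in>S. (u has_derivative blinfun_apply (Du x)) (at x)) \<and>
       (\<forall>x\<in>S. (Du has_derivative blinfun_apply (D2u x)) (at x)) \<and>
       continuous_on S D2u)"

definition laplacian :: "(real^'n \<Rightarrow> real) \<Rightarrow> real^'n \<Rightarrow> real" where
  "laplacian u x = (\<Sum>i\<in>UNIV. deriv (\<lambda>t. deriv (\<lambda>s. u (x + s *\<^sub>R axis i 1)) t) 0)"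

definition positive_solution_S ::
  "real \<Rightarrow> real \<Rightarrow> real \<Rightarrow> real \<Rightarrow> (real^'n \<Rightarrow> real) \<Rightarrow> (real^'n \<Rightarrow> real) \<Rightarrow> bool" where
  "positive_solution_S \<mu>1 \<mu>2 \<beta> q u v \<longleftrightarrow>
     C2_on u (UNIV - {0}) \<and> C2_on v (UNIV - {0}) \<and>
     (\<forall>x. x \<noteq> 0 \<longrightarrow> u x > 0 \<and> v x > 0) \<and>
     (\<forall>x. x \<noteq> 0 \<longrightarrow>
        - laplacian u x = \<mu>1 * u x powr (2*q+1) + \<beta> * u x powr q * v x powr (q+1)) \<and>
     (\<forall>x. x \<noteq> 0 \<longrightarrow>
        - laplacian v x = \<mu>2 * v x powr (2*q+1) + \<beta> * v x powr q * u x powr (q+1))"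

definition kelvin :: "nat \<Rightarrow> (real^'n \<Rightarrow> real) \<Rightarrow> real^'n \<Rightarrow> real" where
  "kelvin n u x = norm x powr (2 - real n) * u (inverse ((norm x)\<^sup>2) *\<^sub>R x)"

end

theory Submission
  imports Defs
begin

lemma C2_line:
  fixes w :: "real^'n \<Rightarrow> real" and a :: "real^'n"
  assumes "C2_on w (UNIV - {0})" "a \<noteq> 0"
  obtains W1 W2 where "\<And>s. s \<noteq> 0 \<Longrightarrow> ((\<lambda>s. w (s *\<^sub>R a)) has_real_derivative W1 s) (at s)"
    "\<And>s. s \<noteq> 0 \<Longrightarrow> (W1 has_real_derivative W2 s) (at s)"
proof -
  obtain Du :: "real^'n \<Rightarrow> ((real^'n) \<Rightarrow>\<^sub>L real)" and D2u :: "real^'n \<Rightarrow> ((real^'n) \<Rightarrow>\<^sub>L ((real^'n) \<Rightarrow>\<^sub>L real))"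
    where d1: "\<forall>x\<in>UNIV-{0}. (w has_derivative blinfun_apply (Du x)) (at x)"
      and d2: "\<forall>x\<in>UNIV-{0}. (Du has_derivative blinfun_apply (D2u x)) (at x)"
    using assms(1) unfolding C2_on_def by blast
  have lin: "((\<lambda>s::real. s *\<^sub>R a) has_derivative (\<lambda>h. h *\<^sub>R a)) (at s)" for s
    by (auto intro!: derivative_eq_intros)
  show ?thesis
  proof (rule that[of "\<lambda>s. blinfun_apply (Du (s *\<^sub>R a)) a" "\<lambda>s. blinfun_apply (blinfun_apply (D2u (s *\<^sub>R a)) a) a"])
    fix s :: real assume s: "s \<noteq> 0"
    have nz: "s *\<^sub>R a \<in> UNIV - {0}" using s assms(2) by simp
    have "((\<lambda>s. w (s *\<^sub>R a)) has_derivative (\<lambda>h. blinfun_apply (Du (s *\<^sub>R a)) (h *\<^sub>R a))) (at s)"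
      using has_derivative_compose[OF lin d1[rule_format, OF nz]] .
    then show "((\<lambda>s. w (s *\<^sub>R a)) has_real_derivative blinfun_apply (Du (s *\<^sub>R a)) a) (at s)"
      unfolding has_field_derivative_def by (rule has_derivative_eq_rhs) (auto simp: fun_eq_iff blinfun.scaleR_right)
    have c: "((\<lambda>s. Du (s *\<^sub>R a)) has_derivative (\<lambda>h. blinfun_apply (D2u (s *\<^sub>R a)) (h *\<^sub>R a))) (at s)"
      using has_derivative_compose[OF lin d2[rule_format, OF nz]] .
    have "((\<lambda>s. blinfun_apply (Du (s *\<^sub>R a)) a) has_derivative
        (\<lambda>h. blinfun_apply (Du (s *\<^sub>R a)) 0 + blinfun_apply (blinfun_apply (D2u (s *\<^sub>R a)) (h *\<^sub>R a)) a)) (at s)"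
      using bounded_bilinear.FDERIV[OF bounded_bilinear_blinfun_apply c has_derivative_const[of a]] .
    then show "((\<lambda>s. blinfun_apply (Du (s *\<^sub>R a)) a) has_real_derivative blinfun_apply (blinfun_apply (D2u (s *\<^sub>R a)) a) a) (at s)"
      unfolding has_field_derivative_def by (rule has_derivative_eq_rhs) (auto simp: fun_eq_iff blinfun.scaleR_right blinfun.zero_right blinfun.scaleR_left)
  qed
qed

lemma norm_line_sq:
  fixes y :: "real^'n"
  shows "(norm (y + t *\<^sub>R axis i 1))\<^sup>2 = (norm y)\<^sup>2 + 2 * t * y$i + t\<^sup>2"
  unfolding power2_norm_eq_inner by (simp add: inner_add_left inner_add_right inner_axis inner_axis' algebra_simps power2_eq_square)

lemma sum_sq_comp: fixes y :: "real^'n" shows "(\<Sum>i\<in>UNIV. (y$i)\<^sup>2) = (norm y)\<^sup>2"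
  unfolding power2_norm_eq_inner by (simp add: inner_vec_def power2_eq_square)

lemma aux_half: "inverse w / 2 * (2*x + 2*z) = (x+z)/(w::real)"
proof -
  have "inverse w / 2 * (2*x + 2*z) = (x * 2 + z * 2) / (w * 2)" by (simp add: field_simps)
  also have "\<dots> = (x+z)/w" by (cases "w = 0") (simp_all add: field_simps)
  finally show ?thesis .
qed

lemma norm_line_deriv:
  fixes y :: "real^'n"
  assumes "norm (y + t *\<^sub>R axis i 1) > 0"
  shows "((\<lambda>t. norm (y + t *\<^sub>R axis i 1)) has_real_derivative (y$i + t) / norm (y + t *\<^sub>R axis i 1)) (at t)"
proof -
  have eq: "\<And>t. norm (y + t *\<^sub>R axis i 1) = sqrt ((norm y)\<^sup>2 + 2 * t * y$i + t\<^sup>2)"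
    by (metis norm_line_sq[of y _ i] norm_ge_zero real_sqrt_unique)
  have Q: "(norm y)\<^sup>2 + 2 * t * y$i + t\<^sup>2 > 0" using assms norm_line_sq[of y t i] by (metis zero_less_power)
  have dq: "((\<lambda>t. (norm y)\<^sup>2 + 2 * t * y$i + t\<^sup>2) has_real_derivative (2 * y$i + 2 * t)) (at t)"
    by (auto intro!: derivative_eq_intros)
  note DERIV_chain2[OF DERIV_real_sqrt[OF Q] dq]
  from DERIV_cong[OF this aux_half] show ?thesis unfolding eq .
qed

lemma radial_laplacian:
  fixes w :: "real^'n \<Rightarrow> real" and W W1 W2 :: "real \<Rightarrow> real" and y :: "real^'n"
  assumes d1: "\<And>s. s > 0 \<Longrightarrow> (W has_real_derivative W1 s) (at s)"
    and d2: "\<And>s. s > 0 \<Longrightarrow> (W1 has_real_derivative W2 s) (at s)"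
    and rad: "\<And>z. z \<noteq> 0 \<Longrightarrow> w z = W (norm z)" and y: "y \<noteq> 0"
  shows "laplacian w y = W2 (norm y) + (real CARD('n) - 1) / norm y * W1 (norm y)"
proof -
  define r where "r = norm y"
  have r: "r > 0" using y by (simp add: r_def)
  have each: "deriv (\<lambda>t. deriv (\<lambda>s. w (y + s *\<^sub>R axis i 1)) t) 0
      = (W2 r - W1 r / r) / r\<^sup>2 * (y$i)\<^sup>2 + W1 r / r" for i
  proof -
    define N where "N t = norm (y + t *\<^sub>R axis i 1)" for t
    have Npos: "N t > 0" if "t \<in> ball 0 r" for t
    proof -
      have "norm y \<le> norm (y + t *\<^sub>R axis i 1) + norm (y - (y + t *\<^sub>R axis i 1))"
        by (rule norm_triangle_sub)
      also have "norm (y - (y + t *\<^sub>R axis i 1)) = \<bar>t\<bar>" by simp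
      finally have "r \<le> N t + \<bar>t\<bar>" by (simp add: N_def r_def)
      moreover have "\<bar>t\<bar> < r" using that by simp
      ultimately show ?thesis by linarith
    qed
    have dN: "(N has_real_derivative (y$i + t)/N t) (at t)" if "t \<in> ball 0 r" for t
      unfolding N_def by (rule norm_line_deriv) (use Npos[OF that] in \<open>simp add: N_def\<close>)
    have eqw: "W (N t) = w (y + t *\<^sub>R axis i 1)" if "t \<in> ball 0 r" for t
    proof -
      have "y + t *\<^sub>R axis i 1 \<noteq> 0" using Npos[OF that] by (auto simp: N_def)
      then show ?thesis using rad by (simp add: N_def)
    qed
    define \<psi> where "\<psi> t = W1 (N t) * ((y$i + t)/N t)" for t
    have dphi: "((\<lambda>s. w (y + s *\<^sub>R axis i 1)) has_real_derivative \<psi> t) (at t)" if "t \<in> ball 0 r" for t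
    proof -
      have "((\<lambda>s. W (N s)) has_real_derivative W1 (N t) * ((y$i+t)/N t)) (at t)"
        by (rule DERIV_chain2[OF d1[OF Npos[OF that]] dN[OF that]])
      then show ?thesis unfolding \<psi>_def
        by (rule has_field_derivative_transform_within_open[where S="ball 0 r"]) (use that eqw in auto)
    qed
    have dd: "deriv (\<lambda>s. w (y + s *\<^sub>R axis i 1)) t = \<psi> t" if "t \<in> ball 0 r" for t
      using DERIV_imp_deriv[OF dphi[OF that]] .
    have c0: "(0::real) \<in> ball 0 r" using r by simp
    have N0: "N 0 = r" by (simp add: N_def r_def)
    have dN0: "(N has_real_derivative y$i / r) (at 0)" using dN[OF c0] N0 by simp
    have dW1: "((\<lambda>t. W1 (N t)) has_real_derivative W2 r * (y$i / r)) (at 0)"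
      using DERIV_chain2[OF d2[OF Npos[OF c0]] dN0] N0 by simp
    have dq: "((\<lambda>t. (y$i + t) / N t) has_real_derivative (1 * N 0 - (y$i + 0) * (y$i / r)) / (N 0 * N 0)) (at 0)"
      by (rule DERIV_divide) (use r in \<open>auto intro!: derivative_eq_intros dN0 simp: N0\<close>)
    have dpsi: "(\<psi> has_real_derivative W2 r * (y$i / r) * ((y$i + 0) / N 0) + ((1 * N 0 - (y$i + 0) * (y$i / r)) / (N 0 * N 0)) * W1 (N 0)) (at 0)"
      unfolding \<psi>_def by (rule DERIV_mult[OF dW1 dq])
    have val: "W2 r * (y$i / r) * ((y$i + 0) / N 0) + ((1 * N 0 - (y$i + 0) * (y$i / r)) / (N 0 * N 0)) * W1 (N 0)
        = (W2 r - W1 r / r) / r\<^sup>2 * (y$i)\<^sup>2 + W1 r / r"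
      using r unfolding N0 by (simp add: field_simps power2_eq_square)
    have "((\<lambda>t. deriv (\<lambda>s. w (y + s *\<^sub>R axis i 1)) t) has_real_derivative (W2 r - W1 r / r) / r\<^sup>2 * (y$i)\<^sup>2 + W1 r / r) (at 0)"
      using dpsi unfolding val
      by (rule has_field_derivative_transform_within_open[where S="ball 0 r"]) (use c0 dd in auto)
    then show ?thesis by (rule DERIV_imp_deriv)
  qed
  have "laplacian w y = (\<Sum>i\<in>UNIV. (W2 r - W1 r / r) / r\<^sup>2 * (y$i)\<^sup>2 + W1 r / r)"
    unfolding laplacian_def using each by simp
  also have "\<dots> = (W2 r - W1 r / r) / r\<^sup>2 * (\<Sum>i\<in>UNIV. (y$i)\<^sup>2) + real CARD('n) * (W1 r / r)"
    by (simp add: sum.distrib sum_distrib_left)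
  also have "\<dots> = W2 r + (real CARD('n) - 1) / r * W1 r"
    unfolding sum_sq_comp r_def[symmetric] using r by (simp add: field_simps power2_eq_square)
  finally show ?thesis by (simp add: r_def)
qed

lemma key1d:
  fixes U U1 U2 :: "real \<Rightarrow> real" and m :: nat
  assumes m: "m \<ge> 1"
    and d1: "\<And>s. s > 0 \<Longrightarrow> (U has_real_derivative U1 s) (at s)"
    and d2: "\<And>s. s > 0 \<Longrightarrow> (U1 has_real_derivative U2 s) (at s)"
    and ode: "\<And>s. s > 0 \<Longrightarrow> U2 s + (real m + 1) / s * U1 s < 0"
    and Upos: "\<And>s. s > 0 \<Longrightarrow> U s > 0"
    and s0: "s0 > 0"
  shows "real m * U s0 + s0 * U1 s0 > 0"
proof (rule ccontr)
  assume "\<not> ?thesis"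
  hence G0: "real m * U s0 + s0 * U1 s0 \<le> 0" by simp
  define G where "G s = real m * U s + s * U1 s" for s
  have dG: "(G has_real_derivative (real m * U1 s + (U1 s + s * U2 s))) (at s)" if "s > 0" for s
    unfolding G_def using d1[OF that] d2[OF that]
    by (auto intro!: derivative_eq_intros)
  have dGneg: "real m * U1 s + (U1 s + s * U2 s) < 0" if "s > 0" for s
  proof -
    have "s * (U2 s + (real m + 1) / s * U1 s) < 0" using ode[OF that] that by (simp add: mult_pos_neg)
    moreover have "s * (U2 s + (real m + 1) / s * U1 s) = s * U2 s + (real m + 1) * U1 s"
      using that by (simp add: field_simps)
    ultimately show ?thesis by (simp add: algebra_simps)
  qed
  have Gdec: "G b < G a" if "0 < a" "a < b" for a b
  proof (rule DERIV_neg_imp_decreasing[OF that(2)])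
    fix x assume "a \<le> x" "x \<le> b"
    hence "x > 0" using that by linarith
    then show "\<exists>y. (G has_real_derivative y) (at x) \<and> y < 0" using dG dGneg by blast
  qed
  define s1 where "s1 = s0 + 1"
  have s1: "s1 > 0" "s0 < s1" using s0 by (auto simp: s1_def)
  define c where "c = - G s1"
  have c: "c > 0" using Gdec[OF s0 s1(2)] G0 by (simp add: c_def G_def)
  have Gle: "G s \<le> - c" if "s \<ge> s1" for s
    using Gdec[OF s1(1), of s] that by (cases "s = s1") (auto simp: c_def)
  define \<phi> where "\<phi> s = s ^ m * U s + c / real m * s ^ m" for s
  have dphi: "(\<phi> has_real_derivative s ^ (m - 1) * (G s + c)) (at s)" if "s > 0" for s
  proof -
    have "(\<phi> has_real_derivative (real m * s ^ (m - 1) * U s + s ^ m * U1 s + c / real m * (real m * s ^ (m - 1)))) (at s)"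
      unfolding \<phi>_def using d1[OF that] by (auto intro!: derivative_eq_intros)
    moreover have "s ^ m = s ^ (m - 1) * s" using m by (metis Suc_diff_le diff_Suc_1 power_Suc2)
    ultimately show ?thesis using m unfolding G_def by (simp add: algebra_simps)
  qed
  have phile: "\<phi> s \<le> \<phi> s1" if "s \<ge> s1" for s
  proof -
    have "\<phi> s1 \<ge> \<phi> s"
    proof (rule DERIV_nonpos_imp_nonincreasing[of s1 s \<phi>])
      show "s1 \<le> s" by fact
      fix x assume x: "s1 \<le> x" "x \<le> s"
      hence xp: "x > 0" using s1 by linarith
      have "x ^ (m - 1) * (G x + c) \<le> 0"
        using Gle[OF x(1)] xp by (simp add: mult_nonneg_nonpos)
      then show "\<exists>y. (\<phi> has_real_derivative y) (at x) \<and> y \<le> 0" using dphi[OF xp] by blast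
    qed
    then show ?thesis by simp
  qed
  define S where "S = max s1 (max 1 (real m * (\<phi> s1 + 1) / c))"
  have S: "S \<ge> s1" "S \<ge> 1" "S \<ge> real m * (\<phi> s1 + 1) / c" by (auto simp: S_def)
  have "S ^ 1 \<le> S ^ m" using S(2) m by (rule power_increasing[rotated])
  hence "S \<le> S ^ m" by simp
  have "c / real m * S \<ge> \<phi> s1 + 1"
  proof -
    have "c / real m * S \<ge> c / real m * (real m * (\<phi> s1 + 1) / c)"
      using S(3) c m by (intro mult_left_mono) auto
    also have "c / real m * (real m * (\<phi> s1 + 1) / c) = \<phi> s1 + 1" using c m by (simp add: field_simps)
    finally show ?thesis .
  qed
  moreover have "c / real m * S \<le> c / real m * S ^ m" using \<open>S \<le> S ^ m\<close> c m by (intro mult_left_mono) auto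
  moreover have "\<phi> S \<le> \<phi> s1" using phile S(1) by simp
  moreover have "S ^ m * U S > 0" using S(2) Upos[of S] by simp
  ultimately show False unfolding \<phi>_def by linarith
qed

lemma ubar_deriv:
  fixes U U1 ub :: "real \<Rightarrow> real" and m :: nat
  assumes m: "m \<ge> 1"
    and d1: "\<And>s. s > 0 \<Longrightarrow> (U has_real_derivative U1 s) (at s)"
    and G: "\<And>s. s > 0 \<Longrightarrow> real m * U s + s * U1 s > 0"
    and hub: "\<And>r. r > 0 \<Longrightarrow> ub r = inverse r ^ m * U (inverse r)"
    and r: "r > 0"
  shows "\<exists>d. (ub has_real_derivative d) (at r) \<and> d < 0"
proof -
  define K where "K s = s ^ m * U s" for s
  have dK: "(K has_real_derivative s ^ (m - 1) * (real m * U s + s * U1 s)) (at s)" if "s > 0" for s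
  proof -
    have "(K has_real_derivative (real m * s ^ (m - 1) * U s + s ^ m * U1 s)) (at s)"
      unfolding K_def using d1[OF that] by (auto intro!: derivative_eq_intros)
    moreover have "s ^ m = s ^ (m - 1) * s" using m by (metis Suc_diff_le diff_Suc_1 power_Suc2)
    ultimately show ?thesis by (simp add: algebra_simps)
  qed
  define s where "s = inverse r"
  have s: "s > 0" using r by (simp add: s_def)
  have pos: "s ^ (m - 1) * (real m * U s + s * U1 s) > 0" using G[OF s] s by simp
  have "((\<lambda>r. K (inverse r)) has_real_derivative s ^ (m - 1) * (real m * U s + s * U1 s) * (- (inverse r ^ 2))) (at r)"
  proof -
    have dKs: "(K has_real_derivative s ^ (m - 1) * (real m * U s + s * U1 s)) (at (inverse r))"
      using dK[OF s] unfolding s_def .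
    have "r \<noteq> 0" using r by simp
    from DERIV_chain2[OF dKs DERIV_inverse[OF this, where s=UNIV]] show ?thesis by (simp add: power2_eq_square)
  qed
  hence "(ub has_real_derivative s ^ (m - 1) * (real m * U s + s * U1 s) * (- (inverse r ^ 2))) (at r)"
    by (rule has_field_derivative_transform_within_open[where S="{0<..}"]) (use r hub in \<open>auto simp: K_def\<close>)
  moreover have "s ^ (m - 1) * (real m * U s + s * U1 s) * (- (inverse r ^ 2)) < 0"
    using pos r by (simp add: mult_pos_neg)
  ultimately show ?thesis by blast
qed

lemma part2:
  fixes ub :: "real \<Rightarrow> real"
  assumes "\<And>r. r > 0 \<Longrightarrow> \<exists>d. (ub has_real_derivative d) (at r) \<and> d < 0"
  shows "deriv (\<lambda>s. exp (- \<delta> * s) * ub (exp (- s))) t > - \<delta> * (exp (- \<delta> * t) * ub (exp (- t)))"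
proof -
  obtain d where d: "(ub has_real_derivative d) (at (exp (- t)))" "d < 0" using assms[of "exp (-t)"] by auto
  have "((\<lambda>s. exp (- \<delta> * s) * ub (exp (- s))) has_real_derivative
      (exp (- \<delta> * t) * (- \<delta>)) * ub (exp (- t)) + (d * (exp (- t) * (- 1))) * exp (- \<delta> * t)) (at t)"
  proof -
    have e: "((\<lambda>s. exp (- s)) has_real_derivative exp (- t) * (- 1)) (at t)"
      by (auto intro!: derivative_eq_intros)
    have c: "((\<lambda>s. ub (exp (- s))) has_real_derivative d * (exp (- t) * (- 1))) (at t)"
      by (rule DERIV_chain2[where f=ub and g="\<lambda>s. exp (- s)", OF d(1) e])
    have ex: "((\<lambda>s. exp (- \<delta> * s)) has_real_derivative exp (- \<delta> * t) * (- \<delta>)) (at t)"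
      by (auto intro!: derivative_eq_intros)
    show ?thesis by (rule DERIV_mult[OF ex c])
  qed
  hence "deriv (\<lambda>s. exp (- \<delta> * s) * ub (exp (- s))) t = (exp (- \<delta> * t) * (- \<delta>)) * ub (exp (- t)) + (d * (exp (- t) * (- 1))) * exp (- \<delta> * t)"
    by (rule DERIV_imp_deriv)
  moreover have "(d * (exp (- t) * (- 1))) * exp (- \<delta> * t) > 0"
  proof -
    have "d * exp (- t) * exp (- \<delta> * t) < 0" using d(2) by (intro mult_neg_pos) auto
    then show ?thesis by simp
  qed
  ultimately show ?thesis by (simp add: algebra_simps)
qed

lemma component:
  fixes u :: "real^'n \<Rightarrow> real" and ub :: "real \<Rightarrow> real"
  assumes n3: "CARD('n) \<ge> 3" and C2: "C2_on u (UNIV - {0})"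
    and upos: "\<And>x. x \<noteq> 0 \<Longrightarrow> u x > 0"
    and lap: "\<And>x. x \<noteq> 0 \<Longrightarrow> - laplacian u x > 0"
    and rad: "\<And>x. x \<noteq> 0 \<Longrightarrow> kelvin CARD('n) u x = ub (norm x)"
    and r: "r > 0"
  shows "\<exists>d. (ub has_real_derivative d) (at r) \<and> d < 0"
proof -
  define n where "n = CARD('n)"
  define m where "m = n - 2"
  have m: "m \<ge> 1" using n3 by (simp add: m_def n_def)
  have mn: "real n - 1 = real m + 1" "real n - 2 = real m" using n3 by (auto simp: m_def n_def of_nat_diff)
  define a :: "real^'n" where "a = axis undefined 1"
  have a: "norm a = 1" "a \<noteq> 0" by (auto simp: a_def axis_eq_0_iff)
  obtain U1 U2 where d1: "\<And>s. s \<noteq> 0 \<Longrightarrow> ((\<lambda>s. u (s *\<^sub>R a)) has_real_derivative U1 s) (at s)"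
    and d2: "\<And>s. s \<noteq> 0 \<Longrightarrow> (U1 has_real_derivative U2 s) (at s)"
    using C2_line[OF C2 a(2)] by blast
  define U where "U s = u (s *\<^sub>R a)" for s
  have kel: "u z = ub (inverse (norm z)) / (inverse (norm z) powr (2 - real n))" if "z \<noteq> 0" for z
  proof -
    define x where "x = inverse ((norm z)\<^sup>2) *\<^sub>R z"
    have nx: "norm x = inverse (norm z)" using that by (simp add: x_def power2_eq_square)
    have x0: "x \<noteq> 0" using that by (simp add: x_def)
    have c1: "inverse ((norm x)\<^sup>2) * inverse ((norm z)\<^sup>2) = 1" using that by (simp add: nx power_inverse)
    have "inverse ((norm x)\<^sup>2) *\<^sub>R x = (inverse ((norm x)\<^sup>2) * inverse ((norm z)\<^sup>2)) *\<^sub>R z"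
      by (simp only: x_def scaleR_scaleR)
    hence bk: "inverse ((norm x)\<^sup>2) *\<^sub>R x = z" using c1 by simp
    have "kelvin n u x = ub (norm x)" using rad x0 by (simp add: n_def)
    hence eq: "inverse (norm z) powr (2 - real n) * u z = ub (inverse (norm z))"
      using bk unfolding kelvin_def nx by simp
    have "inverse (norm z) powr (2 - real n) > 0" using that by simp
    with eq show ?thesis by (simp add: field_simps)
  qed
  have radU: "u z = U (norm z)" if "z \<noteq> 0" for z
  proof -
    have nz: "norm (norm z *\<^sub>R a) = norm z" using a by simp
    have "norm z *\<^sub>R a \<noteq> 0" using that a by simp
    from kel[OF this] kel[OF that] show ?thesis unfolding U_def nz by simp
  qed
  have Upos: "U s > 0" if "s > 0" for s
    unfolding U_def using upos a that by simp
  have d1': "\<And>s. s > 0 \<Longrightarrow> (U has_real_derivative U1 s) (at s)"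
    using d1 unfolding U_def[abs_def] by simp
  have d2': "\<And>s. s > 0 \<Longrightarrow> (U1 has_real_derivative U2 s) (at s)" using d2 by simp
  have ode: "U2 s + (real m + 1) / s * U1 s < 0" if "s > 0" for s
  proof -
    have z: "s *\<^sub>R a \<noteq> 0" using that a by simp
    have ns: "norm (s *\<^sub>R a) = s" using that a by simp
    have "laplacian u (s *\<^sub>R a) = U2 s + (real CARD('n) - 1) / s * U1 s"
      using radial_laplacian[of U U1 U2 u "s *\<^sub>R a", OF d1' d2' radU z] unfolding ns .
    then show ?thesis using lap[OF z] mn(1) by (simp add: n_def algebra_simps)
  qed
  have G: "real m * U s + s * U1 s > 0" if "s > 0" for s
    by (rule key1d[OF m d1' d2' ode Upos that])
  have hub: "ub r = inverse r ^ m * U (inverse r)" if "r > 0" for r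
  proof -
    have x0: "r *\<^sub>R a \<noteq> 0" using that a by simp
    have nx: "norm (r *\<^sub>R a) = r" using that a by simp
    have pw: "r powr (2 - real n) = inverse r ^ m"
    proof -
      have "r powr (2 - real n) = r powr (- real m)" using mn(2) by (simp add: algebra_simps)
      also have "\<dots> = inverse (r ^ m)" using that by (simp add: powr_minus powr_realpow)
      finally show ?thesis by (simp add: power_inverse)
    qed
    have sc: "inverse (r\<^sup>2) *\<^sub>R r *\<^sub>R a = inverse r *\<^sub>R a" using that by (simp add: power2_eq_square)
    have "kelvin n u (r *\<^sub>R a) = ub r" using rad[OF x0] nx by (simp add: n_def)
    then show ?thesis unfolding kelvin_def nx pw sc U_def by simp
  qed
  show ?thesis by (rule ubar_deriv[OF m d1' G hub r])
qed

theorem lemma4p4: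
  fixes u v :: "real^'n \<Rightarrow> real"
    and ubar vbar :: "real \<Rightarrow> real"
    and \<mu>1 \<mu>2 \<beta> q p \<alpha> \<delta>0 :: real
    and n :: nat
  defines "n \<equiv> CARD('n)"
  defines "p \<equiv> 2*q + 1"
  defines "\<alpha> \<equiv> p * (real n - 2) - (real n + 2)"
  defines "\<delta>0 \<equiv> (2 + \<alpha>) / (p - 1)"
  assumes n3: "n \<ge> 3"
    and pos: "\<mu>1 > 0" "\<mu>2 > 0" "\<beta> > 0"
    and prange: "real n / (real n - 2) < p" "p < (real n + 2) / (real n - 2)"
    and sol: "positive_solution_S \<mu>1 \<mu>2 \<beta> q u v"
    and radial: "\<forall>x. x \<noteq> 0 \<longrightarrow> kelvin n u x = ubar (norm x)"
                "\<forall>x. x \<noteq> 0 \<longrightarrow> kelvin n v x = vbar (norm x)"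
  shows "(\<forall>r>0. deriv ubar r < 0 \<and> deriv vbar r < 0) \<and>
         (\<forall>t::real.
            deriv (\<lambda>s. exp (- \<delta>0 * s) * ubar (exp (- s))) t
              > - \<delta>0 * (exp (- \<delta>0 * t) * ubar (exp (- t))) \<and>
            deriv (\<lambda>s. exp (- \<delta>0 * s) * vbar (exp (- s))) t
              > - \<delta>0 * (exp (- \<delta>0 * t) * vbar (exp (- t))))"
proof -
  have C2u: "C2_on u (UNIV - {0})" and C2v: "C2_on v (UNIV - {0})"
    and uvpos: "\<And>x. x \<noteq> 0 \<Longrightarrow> u x > 0 \<and> v x > 0"
    and pdeu: "\<And>x. x \<noteq> 0 \<Longrightarrow> - laplacian u x = \<mu>1 * u x powr (2*q+1) + \<beta> * u x powr q * v x powr (q+1)"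
    and pdev: "\<And>x. x \<noteq> 0 \<Longrightarrow> - laplacian v x = \<mu>2 * v x powr (2*q+1) + \<beta> * v x powr q * u x powr (q+1)"
    using sol unfolding positive_solution_S_def by auto
  have n3': "CARD('n) \<ge> 3" using n3 by (simp add: n_def)
  have lapu: "- laplacian u x > 0" if "x \<noteq> 0" for x
  proof -
    have "u x > 0" "v x > 0" using uvpos[OF that] by auto
    hence "\<mu>1 * u x powr (2*q+1) > 0" "\<beta> * u x powr q * v x powr (q+1) > 0" using pos by auto
    then show ?thesis using pdeu[OF that] by linarith
  qed
  have lapv: "- laplacian v x > 0" if "x \<noteq> 0" for x
  proof -
    have "u x > 0" "v x > 0" using uvpos[OF that] by auto
    hence "\<mu>2 * v x powr (2*q+1) > 0" "\<beta> * v x powr q * u x powr (q+1) > 0" using pos by auto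
    then show ?thesis using pdev[OF that] by linarith
  qed
  have du: "\<exists>d. (ubar has_real_derivative d) (at r) \<and> d < 0" if "r > 0" for r
    by (rule component[OF n3' C2u _ lapu _ that]) (use uvpos radial(1) n_def in auto)
  have dv: "\<exists>d. (vbar has_real_derivative d) (at r) \<and> d < 0" if "r > 0" for r
    by (rule component[OF n3' C2v _ lapv _ that]) (use uvpos radial(2) n_def in auto)
  have "deriv ubar r < 0 \<and> deriv vbar r < 0" if "r > 0" for r
    using du[OF that] dv[OF that] DERIV_imp_deriv by metis
  moreover have "deriv (\<lambda>s. exp (- \<delta>0 * s) * ubar (exp (- s))) t > - \<delta>0 * (exp (- \<delta>0 * t) * ubar (exp (- t)))" for t
    by (rule part2) (rule du)
  moreover have "deriv (\<lambda>s. exp (- \<delta>0 * s) * vbar (exp (- s))) t > - \<delta>0 * (exp (- \<delta>0 * t) * vbar (exp (- t)))" for t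
    by (rule part2) (rule dv)
  ultimately show ?thesis by blast
qed

end
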